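(* Let $D$ and $E$ be Banach spaces, $(\Omega,\mu)$ a measure space with a $\sigma$-additive $\sigma$-finite measure, and $A\subset L(D)$ a Banach algebra of operators isomorphic to $L^\infty_\mu(\Omega,L(E))$. Let $G$ be a discrete group and $g\mapsto T_g$ a representation of $G$ by isometries of $D$ with $T_gAT_g^{-1}=A$ for all $g$. If $G$ acts metrically freely (in the sense of the context), then $B(A,T_g)$ possesses property ( * ): for every finite sum $b=\sum_{g} a_gT_g$ with $a_g\in A$, $\|b\|\ge\|a_e\|$, where $e$ is the identity of $G$.
   Context: $B(A,T_g)$ is the closed subalgebra of $L(D)$ generated by $A$ and $\{T_g\}_{g\in G}$. $\hat T_g(a)=T_gaT_g^{-1}$ is an automorphism of $A$ and preserves its center $Z(A)\cong L^\infty_\mu(\Omega)$ (scalar-valued functions times the identity). For a measurable set $\Delta$, let $\chi_\Delta\in Z(A)$ be the element corresponding to its characteristic function; $\hat T_g(\chi_\Delta)$ is a central projection $\chi_{\tilde\Delta}$ and one sets $\alpha_g(\Delta)=\tilde\Delta$ (sets modulo null sets). $G$ acts metrically freely if for every finite $\{g_1,\dots,g_k\}\subset G$ and every measurable $\Delta$ with $\mu(\Delta)>0$ there is a measurable $\Delta'\subset\Delta$ with $\mu(\Delta')>0$ and $\mu(\alpha_{g_i}(\Delta')\cap\alpha_{g_j}(\Delta'))=0$ for $i\neq j$. *)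

theory Defs
  imports "HOL-Analysis.Analysis" "HOL-Probability.Essential_Supremum"
begin

text \<open>Elements of L-infinity(Omega, L(E)) are represented by measurable functions
  Omega -> L(E) with finite essential supremum of the operator norm, modulo a.e. equality.\<close>

definition Linf_fun :: "'w measure \<Rightarrow> ('w \<Rightarrow> ('e::banach \<Rightarrow>\<^sub>L 'e)) \<Rightarrow> bool" where
  "Linf_fun M f \<longleftrightarrow> f \<in> borel_measurable M \<and> esssup M (\<lambda>x. ereal (norm (f x))) < \<infinity>"

definition Linf_norm :: "'w measure \<Rightarrow> ('w \<Rightarrow> ('e::banach \<Rightarrow>\<^sub>L 'e)) \<Rightarrow> real" where
  "Linf_norm M f = real_of_ereal (max 0 (esssup M (\<lambda>x. ereal (norm (f x)))))"

definition banach_operator_algebra :: "('d::banach \<Rightarrow>\<^sub>L 'd) set \<Rightarrow> bool" where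
  "banach_operator_algebra A \<longleftrightarrow> 0 \<in> A \<and> closed A \<and>
     (\<forall>a\<in>A. \<forall>b\<in>A. a + b \<in> A \<and> a o\<^sub>L b \<in> A) \<and> (\<forall>c. \<forall>a\<in>A. c *\<^sub>R a \<in> A)"

definition Linf_iso ::
  "'w measure \<Rightarrow> ('d::banach \<Rightarrow>\<^sub>L 'd) set \<Rightarrow> (('w \<Rightarrow> ('e::banach \<Rightarrow>\<^sub>L 'e)) \<Rightarrow> ('d \<Rightarrow>\<^sub>L 'd)) \<Rightarrow> bool" where
  "Linf_iso M A \<phi> \<longleftrightarrow>
     (\<forall>f. Linf_fun M f \<longrightarrow> \<phi> f \<in> A) \<and>
     (\<forall>a\<in>A. \<exists>f. Linf_fun M f \<and> \<phi> f = a) \<and>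
     (\<forall>f g. Linf_fun M f \<and> Linf_fun M g \<longrightarrow> (\<phi> f = \<phi> g \<longleftrightarrow> (AE x in M. f x = g x))) \<and>
     (\<forall>f g. Linf_fun M f \<and> Linf_fun M g \<longrightarrow> \<phi> (\<lambda>x. f x + g x) = \<phi> f + \<phi> g) \<and>
     (\<forall>f c. Linf_fun M f \<longrightarrow> \<phi> (\<lambda>x. c *\<^sub>R f x) = c *\<^sub>R \<phi> f) \<and>
     (\<forall>f g. Linf_fun M f \<and> Linf_fun M g \<longrightarrow> \<phi> (\<lambda>x. f x o\<^sub>L g x) = \<phi> f o\<^sub>L \<phi> g) \<and>
     (\<forall>f. Linf_fun M f \<longrightarrow> norm (\<phi> f) = Linf_norm M f)"

definition chi_elem :: "(('w \<Rightarrow> ('e::banach \<Rightarrow>\<^sub>L 'e)) \<Rightarrow> ('d::banach \<Rightarrow>\<^sub>L 'd)) \<Rightarrow> 'w set \<Rightarrow> ('d \<Rightarrow>\<^sub>L 'd)" where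
  "chi_elem \<phi> \<Delta> = \<phi> (\<lambda>x. indicator \<Delta> x *\<^sub>R id_blinfun)"

text \<open>alpha_g(Delta) = Delta' means T_g chi_Delta T_g^{-1} = chi_Delta' (sets mod null sets).\<close>
definition alpha_rel ::
  "'w measure \<Rightarrow> (('w \<Rightarrow> ('e::banach \<Rightarrow>\<^sub>L 'e)) \<Rightarrow> ('d::banach \<Rightarrow>\<^sub>L 'd)) \<Rightarrow> ('g::group_add \<Rightarrow> ('d \<Rightarrow>\<^sub>L 'd))
     \<Rightarrow> 'g \<Rightarrow> 'w set \<Rightarrow> 'w set \<Rightarrow> bool" where
  "alpha_rel M \<phi> T g \<Delta> \<Delta>' \<longleftrightarrow> \<Delta>' \<in> sets M \<and> T g o\<^sub>L chi_elem \<phi> \<Delta> o\<^sub>L T (- g) = chi_elem \<phi> \<Delta>'"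

definition metrically_free ::
  "'w measure \<Rightarrow> (('w \<Rightarrow> ('e::banach \<Rightarrow>\<^sub>L 'e)) \<Rightarrow> ('d::banach \<Rightarrow>\<^sub>L 'd)) \<Rightarrow> ('g::group_add \<Rightarrow> ('d \<Rightarrow>\<^sub>L 'd)) \<Rightarrow> bool" where
  "metrically_free M \<phi> T \<longleftrightarrow>
     (\<forall>F \<Delta>. finite F \<and> \<Delta> \<in> sets M \<and> emeasure M \<Delta> > 0 \<longrightarrow>
        (\<exists>\<Delta>'\<in>sets M. \<Delta>' \<subseteq> \<Delta> \<and> emeasure M \<Delta>' > 0 \<and>
           (\<forall>g\<in>F. \<forall>h\<in>F. g \<noteq> h \<longrightarrow>
              (\<forall>\<Delta>g \<Delta>h. alpha_rel M \<phi> T g \<Delta>' \<Delta>g \<and> alpha_rel M \<phi> T h \<Delta>' \<Delta>h \<longrightarrow>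
                 emeasure M (\<Delta>g \<inter> \<Delta>h) = 0))))"

end

theory Submission
  imports Defs
begin


lemma hb_lite:
  fixes v :: "'a::real_normed_vector"
  assumes v: "v \<noteq> 0"
  shows "\<exists>f::'a \<Rightarrow> real. bounded_linear f \<and> f v \<noteq> 0"
proof -
  define good where "good G \<longleftrightarrow> (\<forall>x a b. (x,a)\<in>G \<longrightarrow> (x,b)\<in>G \<longrightarrow> a=b) \<and>
     (\<forall>x a y b. (x,a)\<in>G \<longrightarrow> (y,b)\<in>G \<longrightarrow> (x+y,a+b)\<in>G) \<and>
     (\<forall>x a c. (x,a)\<in>G \<longrightarrow> (c *\<^sub>R x, c*a)\<in>G) \<and>
     (\<forall>x a. (x,a)\<in>G \<longrightarrow> a \<le> norm x) \<and> (v, norm v) \<in> G" for G :: "('a \<times> real) set"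
  define G0 where "G0 = {(c *\<^sub>R v, c * norm v) | c. True}"
  have gG0: "good G0"
  proof -
    have 1: "a = b" if H: "(x,a)\<in>G0" "(x,b)\<in>G0" for x a b
    proof -
      obtain c d where "x = c *\<^sub>R v" "a = c * norm v" "x = d *\<^sub>R v" "b = d * norm v"
        using H unfolding G0_def by blast
      then have "c = d" using v by (metis scaleR_cancel_right)
      then show ?thesis using \<open>a = _\<close> \<open>b = _\<close> by simp
    qed
    have 2: "(x+y,a+b)\<in>G0" if H: "(x,a)\<in>G0" "(y,b)\<in>G0" for x a y b
    proof -
      obtain c d where "x = c *\<^sub>R v" "a = c * norm v" "y = d *\<^sub>R v" "b = d * norm v"
        using H unfolding G0_def by auto
      then show ?thesis unfolding G0_def
        by (auto intro!: exI[of _ "c+d"] simp: scaleR_add_left distrib_right)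
    qed
    have 3: "(e *\<^sub>R x, e*a)\<in>G0" if H: "(x,a)\<in>G0" for x a e
    proof -
      obtain c where "x = c *\<^sub>R v" "a = c * norm v"
        using H unfolding G0_def by auto
      then show ?thesis unfolding G0_def by (auto intro!: exI[of _ "e*c"])
    qed
    have 4: "a \<le> norm x" if H: "(x,a)\<in>G0" for x a
    proof -
      obtain c where "x = c *\<^sub>R v" "a = c * norm v"
        using H unfolding G0_def by auto
      then show ?thesis by (simp add: mult_right_mono)
    qed
    have 5: "(v, norm v) \<in> G0" unfolding G0_def by (auto intro!: exI[of _ 1])
    show ?thesis unfolding good_def using 1 2 3 4 5 by blast
  qed
  have "\<exists>M\<in>{G. good G}. \<forall>X\<in>{G. good G}. M \<subseteq> X \<longrightarrow> X = M"
  proof (rule Zorn_Lemma2, intro ballI)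
    fix C assume C: "C \<in> chains {G. good G}"
    show "\<exists>U\<in>{G. good G}. \<forall>X\<in>C. X \<subseteq> U"
    proof (cases "C = {}")
      case True then show ?thesis using gG0 by auto
    next
      case False
      have Cg: "\<And>X. X \<in> C \<Longrightarrow> good X" using C by (auto simp: chains_def)
      have ch: "\<And>X Y. X \<in> C \<Longrightarrow> Y \<in> C \<Longrightarrow> X \<subseteq> Y \<or> Y \<subseteq> X"
        using C by (auto simp: chains_def chain_subset_def)
      have two: "\<exists>Z\<in>C. p \<in> Z \<and> q \<in> Z" if "p \<in> \<Union>C" "q \<in> \<Union>C" for p q
        using that ch by blast
      have "good (\<Union>C)"
        unfolding good_def
      proof (intro conjI allI impI)
        fix x a b assume "(x,a)\<in>\<Union>C" "(x,b)\<in>\<Union>C"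
        then obtain Z where "Z\<in>C" "(x,a)\<in>Z" "(x,b)\<in>Z" using two by blast
        then show "a = b" using Cg unfolding good_def by blast
      next
        fix x a y b assume "(x,a)\<in>\<Union>C" "(y,b)\<in>\<Union>C"
        then obtain Z where "Z\<in>C" "(x,a)\<in>Z" "(y,b)\<in>Z" using two by blast
        then show "(x+y,a+b)\<in>\<Union>C" using Cg unfolding good_def by blast
      next
        fix x a c assume "(x,a)\<in>\<Union>C"
        then obtain Z where "Z\<in>C" "(x,a)\<in>Z" by blast
        then show "(c *\<^sub>R x, c*a)\<in>\<Union>C" using Cg unfolding good_def by blast
      next
        fix x a assume "(x,a)\<in>\<Union>C"
        then obtain Z where "Z\<in>C" "(x,a)\<in>Z" by blast
        then show "a \<le> norm x" using Cg unfolding good_def by blast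
      next
        obtain Z where "Z \<in> C" using False by blast
        then show "(v, norm v) \<in> \<Union>C" using Cg unfolding good_def by blast
      qed
      then show ?thesis by blast
    qed
  qed
  then obtain M where gM: "good M" and maxM: "\<And>X. good X \<Longrightarrow> M \<subseteq> X \<Longrightarrow> X = M" by blast
  have Mf: "\<And>x a b. (x,a)\<in>M \<Longrightarrow> (x,b)\<in>M \<Longrightarrow> a=b"
    and Madd: "\<And>x a y b. (x,a)\<in>M \<Longrightarrow> (y,b)\<in>M \<Longrightarrow> (x+y,a+b)\<in>M"
    and Msc: "\<And>x a c. (x,a)\<in>M \<Longrightarrow> (c *\<^sub>R x, c*a)\<in>M"
    and Mb: "\<And>x a. (x,a)\<in>M \<Longrightarrow> a \<le> norm x"
    and Mv: "(v, norm v) \<in> M" using gM unfolding good_def by blast+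
  have M0: "(0,0) \<in> M" using Msc[OF Mv, of 0] by simp
  have total: "\<exists>a. (z,a) \<in> M" for z
  proof (rule ccontr)
    assume nz: "\<nexists>a. (z, a) \<in> M"
    define c where "c = Sup {a - norm (y - z) | y a. (y,a) \<in> M}"
    have bdd: "bdd_above {a - norm (y - z) | y a. (y,a) \<in> M}"
    proof (rule bdd_aboveI[of _ "norm z"])
      fix w assume "w \<in> {a - norm (y - z) | y a. (y,a) \<in> M}"
      then obtain y a where "w = a - norm (y - z)" "(y,a)\<in>M" by blast
      moreover have "norm y \<le> norm (y - z) + norm z" by (metis norm_triangle_sub add.commute)
      ultimately show "w \<le> norm z" using Mb by fastforce
    qed
    have c1: "a - norm (y - z) \<le> c" if "(y,a)\<in>M" for y a
      unfolding c_def using bdd that by (intro cSup_upper) auto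
    have c2: "c \<le> norm (y' + z) - a'" if "(y',a')\<in>M" for y' a'
      unfolding c_def
    proof (rule cSup_least)
      show "{a - norm (y - z) |y a. (y, a) \<in> M} \<noteq> {}" using M0 by blast
    next
      fix w assume "w \<in> {a - norm (y - z) | y a. (y,a) \<in> M}"
      then obtain y a where w: "w = a - norm (y - z)" "(y,a)\<in>M" by blast
      have "a + a' \<le> norm (y + y')" using Mb[OF Madd[OF w(2) that]] .
      also have "norm (y + y') \<le> norm (y - z) + norm (y' + z)"
        using norm_triangle_ineq[of "y - z" "y' + z"] by simp
      finally show "w \<le> norm (y' + z) - a'" using w by simp
    qed
    define G' where "G' = {(x + t *\<^sub>R z, a + t*c) | x a t. (x,a)\<in>M}"
    have memG': "(x + t *\<^sub>R z, a + t*c) \<in> G'" if "(x,a)\<in>M" for x a t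
      unfolding G'_def using that by blast
    have zdom: False if "(x,a)\<in>M" "(x',a')\<in>M" "x + t *\<^sub>R z = x' + t' *\<^sub>R z" "t \<noteq> t'" for x a x' a' t t'
    proof -
      have "(t - t') *\<^sub>R z = x' - x" using that(3) by (simp add: algebra_simps)
      moreover have "(1/(t-t')) *\<^sub>R ((t - t') *\<^sub>R z) = z" using that(4) by simp
      ultimately have "z = (1/(t-t')) *\<^sub>R (x' - x)" by simp
      moreover have "(x' - x, a' - a) \<in> M" using Madd[OF that(2) Msc[OF that(1), of "-1"]] by simp
      ultimately show False using Msc nz by metis
    qed
    have "good G'" unfolding good_def
    proof (intro conjI allI impI)
      fix x a b assume "(x,a)\<in>G'" "(x,b)\<in>G'"
      then obtain x1 a1 t1 x2 a2 t2 where h: "x = x1 + t1 *\<^sub>R z" "a = a1 + t1*c" "(x1,a1)\<in>M"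
        "x = x2 + t2 *\<^sub>R z" "b = a2 + t2*c" "(x2,a2)\<in>M" unfolding G'_def by blast
      then have "t1 = t2" using zdom by metis
      then have "x1 = x2" using h by simp
      then show "a = b" using h Mf \<open>t1 = t2\<close> by metis
    next
      fix x a y b assume "(x,a)\<in>G'" "(y,b)\<in>G'"
      then obtain x1 a1 t1 x2 a2 t2 where h: "x = x1 + t1 *\<^sub>R z" "a = a1 + t1*c" "(x1,a1)\<in>M"
        "y = x2 + t2 *\<^sub>R z" "b = a2 + t2*c" "(x2,a2)\<in>M" unfolding G'_def by blast
      have "(x+y,a+b) = ((x1+x2) + (t1+t2) *\<^sub>R z, (a1+a2) + (t1+t2)*c)"
        using h by (simp add: algebra_simps)
      then show "(x+y,a+b)\<in>G'" using memG'[OF Madd[OF h(3) h(6)]] by simp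
    next
      fix x a e assume "(x,a)\<in>G'"
      then obtain x1 a1 t1 where h: "x = x1 + t1 *\<^sub>R z" "a = a1 + t1*c" "(x1,a1)\<in>M"
        unfolding G'_def by blast
      have "(e *\<^sub>R x, e*a) = (e *\<^sub>R x1 + (e*t1) *\<^sub>R z, e*a1 + (e*t1)*c)"
        using h by (simp add: algebra_simps)
      then show "(e *\<^sub>R x, e*a)\<in>G'" using memG'[OF Msc[OF h(3), of e]] by simp
    next
      fix x a assume "(x,a)\<in>G'"
      then obtain x1 a1 t where h: "x = x1 + t *\<^sub>R z" "a = a1 + t*c" "(x1,a1)\<in>M"
        unfolding G'_def by blast
      show "a \<le> norm x"
      proof (cases t "0::real" rule: linorder_cases)
        case equal then show ?thesis using h Mb by simp
      next
        case greater
        have "c \<le> norm ((1/t) *\<^sub>R x1 + z) - (1/t)*a1" using c2[OF Msc[OF h(3), of "1/t"]] .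
        then have "t * c \<le> t * (norm ((1/t) *\<^sub>R x1 + z) - (1/t)*a1)"
          using greater by (simp add: mult_left_mono)
        also have "\<dots> = norm (t *\<^sub>R ((1/t) *\<^sub>R x1 + z)) - a1"
          using greater by (simp add: right_diff_distrib)
        also have "t *\<^sub>R ((1/t) *\<^sub>R x1 + z) = x1 + t *\<^sub>R z"
          using greater by (simp add: scaleR_add_right)
        finally show ?thesis using h by simp
      next
        case less
        define s where "s = -t"
        have s: "s > 0" using less s_def by simp
        have "(1/s)*a1 - norm ((1/s) *\<^sub>R x1 - z) \<le> c" using c1[OF Msc[OF h(3), of "1/s"]] .
        then have A: "s * ((1/s)*a1 - norm ((1/s) *\<^sub>R x1 - z)) \<le> s * c"
          using s by (simp add: mult_left_mono)
        have B: "s * ((1/s)*a1 - norm ((1/s) *\<^sub>R x1 - z)) = a1 - norm (s *\<^sub>R ((1/s) *\<^sub>R x1 - z))"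
          using s by (simp add: right_diff_distrib)
        have C: "s *\<^sub>R ((1/s) *\<^sub>R x1 - z) = x1 + t *\<^sub>R z"
          using s by (simp add: scaleR_diff_right s_def)
        have "a1 - norm (x1 + t *\<^sub>R z) \<le> s * c" using A B C by metis
        moreover have "s * c = - (t * c)" by (simp add: s_def)
        ultimately show ?thesis unfolding h(1,2) by linarith
      qed
    next
      show "(v, norm v) \<in> G'" using memG'[OF Mv, of 0] by simp
    qed
    moreover have "M \<subseteq> G'" using memG'[of _ _ 0] by auto
    moreover have "(z, c) \<in> G'" using memG'[OF M0, of 1] by simp
    ultimately show False using maxM nz by blast
  qed
  define f where "f x = (THE a. (x,a) \<in> M)" for x
  have fM: "(x, f x) \<in> M" for x
    unfolding f_def using total[of x] Mf by (metis theI)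
  have feq: "(x,a) \<in> M \<Longrightarrow> f x = a" for x a using fM Mf by blast
  have lin: "linear f"
  proof
    show "f (x + y) = f x + f y" for x y using feq[OF Madd[OF fM fM]] .
    show "f (r *\<^sub>R x) = r *\<^sub>R f x" for r x using feq[OF Msc[OF fM]] by simp
  qed
  have bnd: "norm (f x) \<le> norm x * 1" for x
  proof -
    have "f x \<le> norm x" using Mb[OF fM] .
    moreover have "f (-x) \<le> norm x" using Mb[OF fM, of "-x"] by simp
    moreover have "f (-x) = - f x" using linear_neg[OF lin] .
    ultimately show ?thesis by simp
  qed
  have "bounded_linear f"
    using lin bnd by (intro bounded_linear_intro[of _ 1]) (auto simp: linear_add linear_scale)
  moreover have "f v \<noteq> 0" using feq[OF Mv] v by simp
  ultimately show ?thesis by blast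
qed



lemma borel_selection:
  fixes U :: "'i \<Rightarrow> 'a::metric_space set" and dflt :: 'i
  assumes opn: "\<And>i. open (U i)"
  shows "\<exists>F. (\<forall>t. t \<in> \<Union>(range U) \<longrightarrow> t \<in> U (F t)) \<and> (\<forall>t. t \<notin> \<Union>(range U) \<longrightarrow> F t = dflt) \<and>
     (\<forall>\<Phi> :: 'a \<Rightarrow> 'i \<Rightarrow> 'c::topological_space. (\<forall>i. continuous_on UNIV (\<lambda>t. \<Phi> t i)) \<longrightarrow>
        (\<lambda>t. \<Phi> t (F t)) \<in> borel_measurable borel)"
proof -
  obtain R :: "'i rel" where R: "Well_order R" "Field R = UNIV" using well_ordering[where 'a='i] by auto
  define lt where "lt i j \<longleftrightarrow> (i,j) \<in> R \<and> i \<noteq> j" for i j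
  have wfR: "wf (R - Id)" using R(1) by (simp add: well_order_on_def)
  have tot: "lt i j \<or> lt j i" if "i \<noteq> j" for i j
  proof -
    have "total_on UNIV R" using R by (metis well_order_on_def linear_order_on_def)
    then show ?thesis using that unfolding lt_def total_on_def by blast
  qed
  have ltR: "lt i j \<longleftrightarrow> (i,j) \<in> R - Id" for i j unfolding lt_def by auto
  define US where "US = \<Union>(range U)"
  define mn where "mn c i \<longleftrightarrow> c \<in> U i \<and> (\<forall>j. lt j i \<longrightarrow> c \<notin> U j)" for c i
  have mn_ex: "\<exists>i. mn c i" if H: "c \<in> US" for c
  proof -
    obtain i where "c \<in> U i" using H US_def by blast
    then have "i \<in> {i. c \<in> U i}" by simp
    from wfE_min[OF wfR this] obtain z where "z \<in> {i. c \<in> U i}" "\<And>y. (y,z) \<in> R - Id \<Longrightarrow> y \<notin> {i. c \<in> U i}"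
      by blast
    then show ?thesis unfolding mn_def ltR by blast
  qed
  have mn_un: "i = j" if "mn c i" "mn c j" for c i j
    using that tot unfolding mn_def by blast
  define least where "least c = (SOME i. mn c i)" for c
  have least: "mn c (least c)" if "c \<in> US" for c
    unfolding least_def using mn_ex[OF that] by (rule someI_ex)
  define \<delta> where "\<delta> n = 1 / real (Suc n)" for n
  have dpos: "\<delta> n > 0" for n unfolding \<delta>_def by simp
  define V where "V i n = \<Union>{ball c (\<delta> n) | c. c \<in> US \<and> least c = i \<and> ball c (3 * \<delta> n) \<subseteq> U i}" for i n
  have Vopen: "open (V i n)" for i n unfolding V_def by auto
  have VU: "V i n \<subseteq> U i" for i n
  proof
    fix x assume "x \<in> V i n"
    then obtain c where "x \<in> ball c (\<delta> n)" "ball c (3 * \<delta> n) \<subseteq> U i" unfolding V_def by blast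
    moreover have "ball c (\<delta> n) \<subseteq> ball c (3 * \<delta> n)" using dpos[of n] by (intro subset_ball) simp
    ultimately show "x \<in> U i" by blast
  qed
  have Vdisj: "i = j" if H: "x \<in> V i n" "x \<in> V j n" for x i j n
  proof (rule ccontr)
    assume ij: "i \<noteq> j"
    obtain c where c: "x \<in> ball c (\<delta> n)" "c \<in> US" "least c = i" "ball c (3 * \<delta> n) \<subseteq> U i"
      using H(1) unfolding V_def by blast
    obtain c' where c': "x \<in> ball c' (\<delta> n)" "c' \<in> US" "least c' = j" "ball c' (3 * \<delta> n) \<subseteq> U j"
      using H(2) unfolding V_def by blast
    have dcc: "dist c c' < 3 * \<delta> n"
    proof -
      have "dist c c' \<le> dist c x + dist x c'" by (rule dist_triangle)
      also have "\<dots> < \<delta> n + \<delta> n" using c(1) c'(1) by (simp add: dist_commute add_strict_mono)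
      finally show ?thesis using dpos[of n] by simp
    qed
    from tot[OF ij] show False
    proof
      assume "lt i j"
      then have "c' \<notin> U i" using least[OF c'(2)] c'(3) unfolding mn_def by blast
      moreover have "c' \<in> ball c (3 * \<delta> n)" using dcc by simp
      ultimately show False using c(4) by blast
    next
      assume "lt j i"
      then have "c \<notin> U j" using least[OF c(2)] c(3) unfolding mn_def by blast
      moreover have "c \<in> ball c' (3 * \<delta> n)" using dcc by (simp add: dist_commute)
      ultimately show False using c'(4) by blast
    qed
  qed
  have Vcov: "\<exists>n. t \<in> V (least t) n" if H: "t \<in> US" for t
  proof -
    have tU: "t \<in> U (least t)" using least[OF H] unfolding mn_def by blast
    obtain e where e: "e > 0" "ball t e \<subseteq> U (least t)" using opn tU open_contains_ball by blast
    obtain n where n0: "3 / e < real n" using reals_Archimedean2 by blast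
    then have n: "3 / e < real (Suc n)" by simp
    have "3 < e * real (Suc n)" using n e(1) by (simp add: divide_less_eq mult.commute)
    then have lt: "3 * \<delta> n < e" unfolding \<delta>_def by (simp add: divide_less_eq mult.commute)
    have "ball t (3 * \<delta> n) \<subseteq> ball t e" using lt by (intro subset_ball) simp
    then have "ball t (3 * \<delta> n) \<subseteq> U (least t)" using e(2) by (rule subset_trans)
    then have "ball t (\<delta> n) \<in> {ball c (\<delta> n) | c. c \<in> US \<and> least c = least t \<and> ball c (3 * \<delta> n) \<subseteq> U (least t)}"
      using H by blast
    moreover have "t \<in> ball t (\<delta> n)" using dpos by simp
    ultimately have "t \<in> V (least t) n" unfolding V_def by (rule UnionI)
    then show ?thesis by blast
  qed
  define W where "W n = (\<Union>i. V i n)" for n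
  have USW: "t \<in> US \<longleftrightarrow> (\<exists>n. t \<in> W n)" for t
  proof
    assume "t \<in> US"
    then obtain n where "t \<in> V (least t) n" using Vcov by blast
    then have "t \<in> W n" unfolding W_def by (rule UN_I[OF UNIV_I])
    then show "\<exists>n. t \<in> W n" by (rule exI)
  next
    assume "\<exists>n. t \<in> W n"
    then obtain n i where "t \<in> V i n" unfolding W_def by blast
    then have "t \<in> U i" using VU by blast
    then show "t \<in> US" unfolding US_def by (rule UN_I[OF UNIV_I])
  qed
  define lv where "lv t = (LEAST n. t \<in> W n)" for t
  define F where "F t = (if t \<in> US then (THE i. t \<in> V i (lv t)) else dflt)" for t
  have Fin: "t \<in> V (F t) (lv t)" if H: "t \<in> US" for t
  proof -
    have ex: "\<exists>n. t \<in> W n" using USW H by blast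
    have "t \<in> W (lv t)" unfolding lv_def using ex by (rule LeastI_ex)
    then obtain i where i: "t \<in> V i (lv t)" unfolding W_def by blast
    have "(THE i. t \<in> V i (lv t)) = i"
      by (rule the_equality[where P="\<lambda>i. t \<in> V i (lv t)", OF i], erule Vdisj, rule i)
    then show ?thesis using i H unfolding F_def by simp
  qed
  have F1: "t \<in> U (F t)" if "t \<in> \<Union>(range U)" for t using Fin[of t] VU that US_def by blast
  have F2: "F t = dflt" if "t \<notin> \<Union>(range U)" for t using that unfolding F_def US_def by simp
  have F3: "(\<lambda>t. \<Phi> t (F t)) \<in> borel_measurable borel"
    if cont: "\<forall>i. continuous_on UNIV (\<lambda>t. \<Phi> t i)" for \<Phi> :: "'a \<Rightarrow> 'i \<Rightarrow> 'c::topological_space"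
  proof (rule borel_measurableI)
    fix S :: "'c set" assume S: "open S"
    have oi: "open {t. \<Phi> t i \<in> S}" for i
      using cont S continuous_on_open_vimage[of UNIV "\<lambda>t. \<Phi> t i"] by (simp add: vimage_def)
    have eq: "(\<lambda>t. \<Phi> t (F t)) -` S =
       (\<Union>m. (\<Union>i. V i m \<inter> {t. \<Phi> t i \<in> S}) - (\<Union>j\<in>{..<m}. W j)) \<union> ((- US) \<inter> {t. \<Phi> t dflt \<in> S})"
    proof (intro set_eqI iffI)
      fix t assume t: "t \<in> (\<lambda>t. \<Phi> t (F t)) -` S"
      show "t \<in> (\<Union>m. (\<Union>i. V i m \<inter> {t. \<Phi> t i \<in> S}) - (\<Union>j\<in>{..<m}. W j)) \<union> ((- US) \<inter> {t. \<Phi> t dflt \<in> S})"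
      proof (cases "t \<in> US")
        case True
        have "t \<notin> W j" if "j < lv t" for j using that not_less_Least unfolding lv_def by blast
        then show ?thesis using Fin[OF True] t by blast
      next
        case False then show ?thesis using t unfolding F_def by simp
      qed
    next
      fix t assume "t \<in> (\<Union>m. (\<Union>i. V i m \<inter> {t. \<Phi> t i \<in> S}) - (\<Union>j\<in>{..<m}. W j)) \<union> ((- US) \<inter> {t. \<Phi> t dflt \<in> S})"
      then show "t \<in> (\<lambda>t. \<Phi> t (F t)) -` S"
      proof
        assume "t \<in> (\<Union>m. (\<Union>i. V i m \<inter> {t. \<Phi> t i \<in> S}) - (\<Union>j\<in>{..<m}. W j))"
        then obtain m i where mi: "t \<in> V i m" "\<Phi> t i \<in> S" "\<And>j. j < m \<Longrightarrow> t \<notin> W j" by blast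
        have tW: "t \<in> W m" using mi unfolding W_def by blast
        then have tUS: "t \<in> US" using USW by blast
        have "lv t = m" unfolding lv_def
        proof (rule Least_equality)
          show "t \<in> W m" by fact
          show "m \<le> y" if "t \<in> W y" for y using mi(3) that by (meson not_less)
        qed
        then have "F t = i" using Fin[OF tUS] mi(1) Vdisj by blast
        then show ?thesis using mi by simp
      next
        assume "t \<in> (- US) \<inter> {t. \<Phi> t dflt \<in> S}"
        then show ?thesis unfolding F_def by simp
      qed
    qed
    have "open (\<Union>i. V i m \<inter> {t. \<Phi> t i \<in> S})" for m using Vopen oi by blast
    moreover have "open (\<Union>j\<in>{..<m}. W j)" for m unfolding W_def using Vopen by blast
    moreover have "open US" unfolding US_def using opn by blast
    ultimately have "(\<Union>m. (\<Union>i. V i m \<inter> {t. \<Phi> t i \<in> S}) - (\<Union>j\<in>{..<m}. W j)) \<union> ((- US) \<inter> {t. \<Phi> t dflt \<in> S}) \<in> sets borel"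
      using oi by (intro sets.Un sets.countable_UN sets.Diff sets.Int borel_open borel_closed) auto
    then show "(\<lambda>t. \<Phi> t (F t)) -` S \<inter> space borel \<in> sets borel" using eq by simp
  qed
  show ?thesis using F1 F2 F3 by blast
qed


lemma bc_assoc: "(a o\<^sub>L b) o\<^sub>L c = a o\<^sub>L (b o\<^sub>L c)"
  by (rule blinfun_eqI) simp

lemma Linf_funI:
  fixes f :: "'w \<Rightarrow> ('e::banach \<Rightarrow>\<^sub>L 'e)"
  assumes f: "f \<in> borel_measurable M" and b: "AE x in M. norm (f x) \<le> C"
  shows "Linf_fun M f"
proof -
  have m: "(\<lambda>x. ereal (norm (f x))) \<in> borel_measurable M"
    using measurable_compose[OF f, of "\<lambda>t. ereal (norm t)"] by measurable
  have "esssup M (\<lambda>x. ereal (norm (f x))) \<le> ereal C"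
    using b by (intro esssup_I[OF m]) auto
  then show ?thesis unfolding Linf_fun_def using f by (auto simp: le_less_trans)
qed

lemma Linf_norm_nonneg: "0 \<le> Linf_norm M f"
  unfolding Linf_norm_def by (simp add: real_of_ereal_pos)

lemma real_max0_ge:
  assumes "ereal n \<le> e" "e < \<infinity>" "0 \<le> n"
  shows "n \<le> real_of_ereal (max 0 e)"
  using assms by (cases e) auto

lemma Linf_AE_bound:
  fixes f :: "'w \<Rightarrow> ('e::banach \<Rightarrow>\<^sub>L 'e)"
  assumes "Linf_fun M f"
  shows "AE x in M. norm (f x) \<le> Linf_norm M f"
proof -
  have fin: "esssup M (\<lambda>x. ereal (norm (f x))) < \<infinity>" using assms unfolding Linf_fun_def by blast
  show ?thesis using esssup_AE[of "\<lambda>x. ereal (norm (f x))" M]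
    unfolding Linf_norm_def by eventually_elim (use fin real_max0_ge in auto)
qed

lemma Linf_norm_le:
  fixes f :: "'w \<Rightarrow> ('e::banach \<Rightarrow>\<^sub>L 'e)"
  assumes f: "f \<in> borel_measurable M" and b: "AE x in M. norm (f x) \<le> C" and C: "0 \<le> C"
  shows "Linf_norm M f \<le> C"
proof -
  have m: "(\<lambda>x. ereal (norm (f x))) \<in> borel_measurable M"
    using measurable_compose[OF f, of "\<lambda>t. ereal (norm t)"] by measurable
  have "esssup M (\<lambda>x. ereal (norm (f x))) \<le> ereal C"
    using b by (intro esssup_I[OF m]) auto
  then have "max 0 (esssup M (\<lambda>x. ereal (norm (f x)))) \<le> ereal C" using C by simp
  then show ?thesis unfolding Linf_norm_def
    by (cases "max 0 (esssup M (\<lambda>x. ereal (norm (f x))))") auto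
qed

lemma AE_notin_null:
  assumes "B \<in> sets M" "AE x in M. x \<notin> B"
  shows "emeasure M B = 0"
proof -
  have "{x \<in> space M. \<not> x \<notin> B} = B" using sets.sets_into_space[OF assms(1)] by auto
  then show ?thesis using AE_iff_measurable[OF assms(1), of "\<lambda>x. x \<notin> B"] assms(2) by simp
qed

lemma Linf_norm_ge:
  fixes f :: "'w \<Rightarrow> ('e::banach \<Rightarrow>\<^sub>L 'e)"
  assumes f: "Linf_fun M f" and B: "B \<in> sets M" "emeasure M B > 0"
    and c: "\<And>x. x \<in> B \<Longrightarrow> c \<le> norm (f x)"
  shows "c \<le> Linf_norm M f"
proof (rule ccontr)
  assume "\<not> c \<le> Linf_norm M f"
  then have lt: "Linf_norm M f < c" by simp
  have "AE x in M. x \<notin> B"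
    using Linf_AE_bound[OF f] by eventually_elim (use c lt in force)
  then have "emeasure M B = 0" using AE_notin_null[OF B(1)] by blast
  then show False using B(2) by simp
qed



lemma iso_in: "Linf_iso M A \<phi> \<Longrightarrow> Linf_fun M f \<Longrightarrow> \<phi> f \<in> A"
  unfolding Linf_iso_def by blast
lemma iso_surj: "Linf_iso M A \<phi> \<Longrightarrow> a \<in> A \<Longrightarrow> \<exists>f. Linf_fun M f \<and> \<phi> f = a"
  unfolding Linf_iso_def by blast
lemma iso_eq: "Linf_iso M A \<phi> \<Longrightarrow> Linf_fun M f \<Longrightarrow> Linf_fun M g \<Longrightarrow> \<phi> f = \<phi> g \<longleftrightarrow> (AE x in M. f x = g x)"
  unfolding Linf_iso_def by blast
lemma iso_mult: "Linf_iso M A \<phi> \<Longrightarrow> Linf_fun M f \<Longrightarrow> Linf_fun M g \<Longrightarrow> \<phi> (\<lambda>x. f x o\<^sub>L g x) = \<phi> f o\<^sub>L \<phi> g"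
  unfolding Linf_iso_def by blast
lemma iso_scale: "Linf_iso M A \<phi> \<Longrightarrow> Linf_fun M f \<Longrightarrow> \<phi> (\<lambda>x. c *\<^sub>R f x) = c *\<^sub>R \<phi> f"
  unfolding Linf_iso_def by blast
lemma iso_norm: "Linf_iso M A \<phi> \<Longrightarrow> Linf_fun M f \<Longrightarrow> norm (\<phi> f) = Linf_norm M f"
  unfolding Linf_iso_def by blast

lemma Linf_zero: "Linf_fun M (\<lambda>x. 0 :: 'e::banach \<Rightarrow>\<^sub>L 'e)"
  by (rule Linf_funI[where C=0]) auto

lemma iso_zero:
  fixes \<phi> :: "('w \<Rightarrow> ('e::banach \<Rightarrow>\<^sub>L 'e)) \<Rightarrow> ('d::banach \<Rightarrow>\<^sub>L 'd)"
  assumes iso: "Linf_iso M A \<phi>"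
  shows "\<phi> (\<lambda>x. 0) = 0"
  using iso_scale[OF iso Linf_zero, of 0] by simp

lemma ind_eq: "(\<lambda>x. indicator B x *\<^sub>R (c::'a::real_normed_vector)) = (\<lambda>x. if x \<in> B then c else 0)"
  by (auto simp: indicator_def)

lemma Linf_ind:
  assumes B: "B \<in> sets M"
  shows "Linf_fun M (\<lambda>x. indicator B x *\<^sub>R (id_blinfun :: 'e::banach \<Rightarrow>\<^sub>L 'e))"
proof (rule Linf_funI[where C=1])
  show "(\<lambda>x. indicator B x *\<^sub>R (id_blinfun :: 'e \<Rightarrow>\<^sub>L 'e)) \<in> borel_measurable M"
    unfolding ind_eq using B by (intro measurable_If_set) auto
  show "AE x in M. norm (indicator B x *\<^sub>R (id_blinfun :: 'e \<Rightarrow>\<^sub>L 'e)) \<le> 1"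
    using norm_blinfun_id_le by (auto simp: indicator_def)
qed

lemma chi_in: "Linf_iso M A \<phi> \<Longrightarrow> B \<in> sets M \<Longrightarrow> chi_elem \<phi> B \<in> A"
  unfolding chi_elem_def by (rule iso_in) (auto intro: Linf_ind)

lemma chi_norm:
  fixes \<phi> :: "('w \<Rightarrow> ('e::banach \<Rightarrow>\<^sub>L 'e)) \<Rightarrow> ('d::banach \<Rightarrow>\<^sub>L 'd)"
  assumes iso: "Linf_iso M A \<phi>" and B: "B \<in> sets M"
  shows "norm (chi_elem \<phi> B) \<le> 1"
proof -
  have "norm (chi_elem \<phi> B) = Linf_norm M (\<lambda>x. indicator B x *\<^sub>R (id_blinfun :: 'e \<Rightarrow>\<^sub>L 'e))"
    unfolding chi_elem_def by (rule iso_norm[OF iso Linf_ind[OF B]])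
  also have "\<dots> \<le> 1"
  proof (rule Linf_norm_le)
    show "(\<lambda>x. indicator B x *\<^sub>R (id_blinfun :: 'e \<Rightarrow>\<^sub>L 'e)) \<in> borel_measurable M"
      using Linf_ind[OF B] unfolding Linf_fun_def by blast
    show "AE x in M. norm (indicator B x *\<^sub>R (id_blinfun :: 'e \<Rightarrow>\<^sub>L 'e)) \<le> 1"
      using norm_blinfun_id_le by (auto simp: indicator_def)
  qed simp
  finally show ?thesis .
qed

lemma ind_compose: "(indicator B x *\<^sub>R id_blinfun) o\<^sub>L (indicator C x *\<^sub>R id_blinfun) =
    indicator (B \<inter> C) x *\<^sub>R (id_blinfun :: 'a::real_normed_vector \<Rightarrow>\<^sub>L 'a)"
  by (rule blinfun_eqI) (simp add: indicator_def)

lemma scal_comm_l: "((c::real) *\<^sub>R id_blinfun) o\<^sub>L t = c *\<^sub>R (t :: 'a::real_normed_vector \<Rightarrow>\<^sub>L 'a)"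
  by (rule blinfun_eqI) (simp add: blinfun.scaleR_left)
lemma scal_comm_r: "t o\<^sub>L ((c::real) *\<^sub>R id_blinfun) = c *\<^sub>R (t :: 'a::real_normed_vector \<Rightarrow>\<^sub>L 'a)"
  by (rule blinfun_eqI) (simp add: blinfun.scaleR_right blinfun.scaleR_left)

lemma chi_mult:
  assumes iso: "Linf_iso M A \<phi>" and B: "B \<in> sets M" and C: "C \<in> sets M"
  shows "chi_elem \<phi> B o\<^sub>L chi_elem \<phi> C = chi_elem \<phi> (B \<inter> C)"
  unfolding chi_elem_def using iso_mult[OF iso Linf_ind[OF B] Linf_ind[OF C]] by (simp add: ind_compose)

lemma chi_comm:
  assumes iso: "Linf_iso M A \<phi>" and B: "B \<in> sets M" and f: "Linf_fun M f"
  shows "chi_elem \<phi> B o\<^sub>L \<phi> f = \<phi> f o\<^sub>L chi_elem \<phi> B"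
  unfolding chi_elem_def
  using iso_mult[OF iso Linf_ind[OF B] f] iso_mult[OF iso f Linf_ind[OF B]]
  by (simp add: scal_comm_l scal_comm_r)

lemma chi_comm_A:
  assumes iso: "Linf_iso M A \<phi>" and B: "B \<in> sets M" and a: "a \<in> A"
  shows "chi_elem \<phi> B o\<^sub>L a = a o\<^sub>L chi_elem \<phi> B"
  using iso_surj[OF iso a] chi_comm[OF iso B] by blast

lemma chi_null:
  fixes \<phi> :: "('w \<Rightarrow> ('e::banach \<Rightarrow>\<^sub>L 'e)) \<Rightarrow> ('d::banach \<Rightarrow>\<^sub>L 'd)"
  assumes iso: "Linf_iso M A \<phi>" and B: "B \<in> sets M" and n: "emeasure M B = 0"
  shows "chi_elem \<phi> B = 0"
proof -
  have "AE x in M. x \<notin> B" using AE_iff_measurable[OF B, of "\<lambda>x. x \<notin> B"] n sets.sets_into_space[OF B]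
    by auto
  then have "AE x in M. indicator B x *\<^sub>R (id_blinfun :: 'e \<Rightarrow>\<^sub>L 'e) = 0"
    by eventually_elim simp
  then have "\<phi> (\<lambda>x. indicator B x *\<^sub>R (id_blinfun :: 'e \<Rightarrow>\<^sub>L 'e)) = \<phi> (\<lambda>x. 0)"
    using iso_eq[OF iso Linf_ind[OF B] Linf_zero] by simp
  then show ?thesis unfolding chi_elem_def using iso_zero[OF iso] by simp
qed

lemma chi_restrict:
  fixes \<phi> :: "('w \<Rightarrow> ('e::banach \<Rightarrow>\<^sub>L 'e)) \<Rightarrow> ('d::banach \<Rightarrow>\<^sub>L 'd)"
  assumes iso: "Linf_iso M A \<phi>" and B: "B \<in> sets M" and f: "Linf_fun M f"
  shows "chi_elem \<phi> B o\<^sub>L \<phi> f o\<^sub>L chi_elem \<phi> B = \<phi> (\<lambda>x. if x \<in> B then f x else 0)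
     \<and> Linf_fun M (\<lambda>x. if x \<in> B then f x else 0)"
proof -
  define fB where "fB = (\<lambda>x. if x \<in> B then f x else 0)"
  have fm: "f \<in> borel_measurable M" using f unfolding Linf_fun_def by blast
  have LfB: "Linf_fun M fB"
  proof (rule Linf_funI[where C="Linf_norm M f"])
    show "fB \<in> borel_measurable M" unfolding fB_def using B fm by (intro measurable_If_set) auto
    show "AE x in M. norm (fB x) \<le> Linf_norm M f"
      using Linf_AE_bound[OF f] by eventually_elim (auto simp: fB_def Linf_norm_nonneg)
  qed
  have e1: "(\<lambda>x. (indicator B x *\<^sub>R id_blinfun) o\<^sub>L f x) = fB"
    unfolding fB_def by (auto simp: scal_comm_l indicator_def)
  have e2: "(\<lambda>x. fB x o\<^sub>L (indicator B x *\<^sub>R id_blinfun)) = fB"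
    unfolding fB_def by (auto simp: scal_comm_r indicator_def)
  have "chi_elem \<phi> B o\<^sub>L \<phi> f = \<phi> fB"
    unfolding chi_elem_def using iso_mult[OF iso Linf_ind[OF B] f] e1 by simp
  moreover have "\<phi> fB o\<^sub>L chi_elem \<phi> B = \<phi> fB"
    unfolding chi_elem_def using iso_mult[OF iso LfB Linf_ind[OF B]] e2 by simp
  ultimately show ?thesis using LfB unfolding fB_def by simp
qed



lemma idem_central:
  fixes t :: "'e::real_normed_vector \<Rightarrow>\<^sub>L 'e"
  assumes idem: "t o\<^sub>L t = t" and cen: "\<And>r. norm r \<le> 1 \<Longrightarrow> t o\<^sub>L r = r o\<^sub>L t"
  shows "t = 0 \<or> t = id_blinfun"
proof (rule ccontr)
  assume nt: "\<not> (t = 0 \<or> t = id_blinfun)"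
  have cen2: "t (r z) = r (t z)" for r :: "'e \<Rightarrow>\<^sub>L 'e" and z
  proof (cases "r = 0")
    case True then show ?thesis by simp
  next
    case False
    define r' where "r' = (1 / norm r) *\<^sub>R r"
    have "norm r' \<le> 1" unfolding r'_def using False by simp
    then have "t o\<^sub>L r' = r' o\<^sub>L t" using cen by blast
    from arg_cong[OF this, of "\<lambda>f. blinfun_apply f z"] have "t (r' z) = r' (t z)" by simp
    then have "(1 / norm r) *\<^sub>R t (r z) = (1 / norm r) *\<^sub>R r (t z)"
      unfolding r'_def by (simp add: blinfun.scaleR_left blinfun.scaleR_right)
    then show ?thesis using False by simp
  qed
  have "t \<noteq> 0" using nt by simp
  then obtain u where u: "t u \<noteq> 0" using blinfun_eqI[of t 0] by auto
  have "t \<noteq> id_blinfun" using nt by simp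
  then obtain u' where u': "t u' \<noteq> u'" using blinfun_eqI[of t id_blinfun] by auto
  define v where "v = t u"
  define w where "w = u' - t u'"
  have tt: "t (t z) = t z" for z using arg_cong[OF idem, of "\<lambda>f. blinfun_apply f z"] by simp
  have tv: "t v = v" unfolding v_def using tt by simp
  have tw: "t w = 0" unfolding w_def using tt by (simp add: blinfun.diff_right)
  have w0: "w \<noteq> 0" unfolding w_def using u' by simp
  have v0: "v \<noteq> 0" unfolding v_def using u by simp
  obtain \<psi> :: "'e \<Rightarrow> real" where psi: "bounded_linear \<psi>" "\<psi> v \<noteq> 0" using hb_lite[OF v0] by blast
  have bl: "bounded_linear (\<lambda>z. \<psi> z *\<^sub>R w)"
    using bounded_linear_compose[OF bounded_linear_scaleR_left[of w] psi(1)] by (simp add: o_def)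
  define r where "r = Blinfun (\<lambda>z. \<psi> z *\<^sub>R w)"
  have rz: "r z = \<psi> z *\<^sub>R w" for z unfolding r_def using bounded_linear_Blinfun_apply[OF bl] by simp
  have "t (r v) = \<psi> v *\<^sub>R t w" by (simp add: rz blinfun.scaleR_right)
  also have "\<dots> = 0" using tw by simp
  finally have "r (t v) = 0" using cen2[of r v] by simp
  then have "\<psi> v *\<^sub>R w = 0" using tv rz by simp
  then show False using psi(2) w0 by simp
qed

lemma center_indicator:
  fixes \<phi> :: "('w \<Rightarrow> ('e::banach \<Rightarrow>\<^sub>L 'e)) \<Rightarrow> ('d::banach \<Rightarrow>\<^sub>L 'd)"
  assumes iso: "Linf_iso M A \<phi>" and h: "Linf_fun M h"
    and hh: "\<phi> h o\<^sub>L \<phi> h = \<phi> h"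
    and cen: "\<And>k. Linf_fun M k \<Longrightarrow> \<phi> h o\<^sub>L \<phi> k = \<phi> k o\<^sub>L \<phi> h"
  shows "\<exists>B\<in>sets M. \<phi> h = chi_elem \<phi> B"
proof -
  have hm: "h \<in> borel_measurable M" using h unfolding Linf_fun_def by blast
  define K where "K = Linf_norm M h"
  have K0: "0 \<le> K" unfolding K_def by (rule Linf_norm_nonneg)
  have hK: "AE x in M. norm (h x) \<le> K" unfolding K_def by (rule Linf_AE_bound[OF h])
  have Lhh: "Linf_fun M (\<lambda>x. h x o\<^sub>L h x)"
  proof (rule Linf_funI[where C="K*K"])
    have "(\<lambda>t::'e \<Rightarrow>\<^sub>L 'e. t o\<^sub>L t) \<in> borel_measurable borel"
      by (intro borel_measurable_continuous_onI continuous_intros)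
    then show "(\<lambda>x. h x o\<^sub>L h x) \<in> borel_measurable M"
      using measurable_compose[OF hm] by blast
    show "AE x in M. norm (h x o\<^sub>L h x) \<le> K * K"
      using hK
    proof eventually_elim
      fix x assume "norm (h x) \<le> K"
      then have "norm (h x) * norm (h x) \<le> K * K" using K0 by (intro mult_mono) auto
      then show "norm (h x o\<^sub>L h x) \<le> K * K" using norm_blinfun_compose[of "h x" "h x"] by simp
    qed
  qed
  have AEidem: "AE x in M. h x o\<^sub>L h x = h x"
    using iso_eq[OF iso Lhh h] iso_mult[OF iso h h] hh by simp
  define U where "U r = {t :: 'e \<Rightarrow>\<^sub>L 'e. norm r \<le> 1 \<and> t o\<^sub>L r \<noteq> r o\<^sub>L t}" for r :: "'e \<Rightarrow>\<^sub>L 'e"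
  have Uopen: "open (U r)" for r
  proof (cases "norm r \<le> 1")
    case True
    then have "U r = {t. t o\<^sub>L r \<noteq> r o\<^sub>L t}" unfolding U_def by simp
    moreover have "open {t :: 'e \<Rightarrow>\<^sub>L 'e. t o\<^sub>L r \<noteq> r o\<^sub>L t}"
      by (intro open_Collect_neq continuous_intros)
    ultimately show ?thesis by simp
  next
    case False then show ?thesis unfolding U_def by simp
  qed
  have "\<exists>F. (\<forall>t. t \<in> \<Union>(range U) \<longrightarrow> t \<in> U (F t)) \<and> (\<forall>t. t \<notin> \<Union>(range U) \<longrightarrow> F t = 0) \<and>
     (\<forall>\<Phi> :: ('e \<Rightarrow>\<^sub>L 'e) \<Rightarrow> ('e \<Rightarrow>\<^sub>L 'e) \<Rightarrow> ('e \<Rightarrow>\<^sub>L 'e). (\<forall>i. continuous_on UNIV (\<lambda>t. \<Phi> t i)) \<longrightarrow>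
        (\<lambda>t. \<Phi> t (F t)) \<in> borel_measurable borel)"
    by (rule borel_selection[OF Uopen])
  then obtain F :: "('e \<Rightarrow>\<^sub>L 'e) \<Rightarrow> ('e \<Rightarrow>\<^sub>L 'e)" where
    F1': "\<forall>t. t \<in> \<Union>(range U) \<longrightarrow> t \<in> U (F t)" and
    F2': "\<forall>t. t \<notin> \<Union>(range U) \<longrightarrow> F t = 0" and
    F3': "\<forall>\<Phi> :: ('e \<Rightarrow>\<^sub>L 'e) \<Rightarrow> ('e \<Rightarrow>\<^sub>L 'e) \<Rightarrow> ('e \<Rightarrow>\<^sub>L 'e). (\<forall>i. continuous_on UNIV (\<lambda>t. \<Phi> t i)) \<longrightarrow>
        (\<lambda>t. \<Phi> t (F t)) \<in> borel_measurable borel"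
    by (elim exE conjE)
  have F1: "\<And>t. t \<in> \<Union>(range U) \<Longrightarrow> t \<in> U (F t)" using F1' by blast
  have F2: "\<And>t. t \<notin> \<Union>(range U) \<Longrightarrow> F t = 0" using F2' by blast
  have F3: "(\<lambda>t. \<Phi> t (F t)) \<in> borel_measurable borel"
    if "\<forall>i. continuous_on UNIV (\<lambda>t. \<Phi> t i)" for \<Phi> :: "('e \<Rightarrow>\<^sub>L 'e) \<Rightarrow> ('e \<Rightarrow>\<^sub>L 'e) \<Rightarrow> ('e \<Rightarrow>\<^sub>L 'e)"
    using F3' that by blast
  have Fn: "norm (F t) \<le> 1" for t
  proof (cases "t \<in> \<Union>(range U)")
    case True then show ?thesis using F1[OF True] unfolding U_def by blast
  next
    case False then show ?thesis using F2 by simp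
  qed
  define k where "k x = F (h x)" for x
  have Fm: "(\<lambda>t. F t) \<in> borel_measurable borel" using F3[of "\<lambda>t i. i"] by simp
  have Lk: "Linf_fun M k"
  proof (rule Linf_funI[where C=1])
    show "k \<in> borel_measurable M" unfolding k_def using measurable_compose[OF hm Fm] by simp
    show "AE x in M. norm (k x) \<le> 1" unfolding k_def using Fn by simp
  qed
  have Lhk: "Linf_fun M (\<lambda>x. h x o\<^sub>L k x)"
  proof (rule Linf_funI[where C=K])
    have "(\<lambda>t. t o\<^sub>L F t) \<in> borel_measurable borel"
      using F3[of "\<lambda>t i. t o\<^sub>L i"] by (simp add: continuous_intros)
    then show "(\<lambda>x. h x o\<^sub>L k x) \<in> borel_measurable M"
      unfolding k_def using measurable_compose[OF hm] by blast
    show "AE x in M. norm (h x o\<^sub>L k x) \<le> K"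
      using hK
    proof eventually_elim
      fix x assume "norm (h x) \<le> K"
      then have "norm (h x) * norm (k x) \<le> K * 1"
        using Fn K0 unfolding k_def by (intro mult_mono) auto
      then show "norm (h x o\<^sub>L k x) \<le> K" using norm_blinfun_compose[of "h x" "k x"] by simp
    qed
  qed
  have Lkh: "Linf_fun M (\<lambda>x. k x o\<^sub>L h x)"
  proof (rule Linf_funI[where C=K])
    have "(\<lambda>t. F t o\<^sub>L t) \<in> borel_measurable borel"
      using F3[of "\<lambda>t i. i o\<^sub>L t"] by (simp add: continuous_intros)
    then show "(\<lambda>x. k x o\<^sub>L h x) \<in> borel_measurable M"
      unfolding k_def using measurable_compose[OF hm] by blast
    show "AE x in M. norm (k x o\<^sub>L h x) \<le> K"
      using hK
    proof eventually_elim
      fix x assume "norm (h x) \<le> K"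
      then have "norm (k x) * norm (h x) \<le> 1 * K"
        using Fn K0 unfolding k_def by (intro mult_mono) auto
      then show "norm (k x o\<^sub>L h x) \<le> K" using norm_blinfun_compose[of "k x" "h x"] by simp
    qed
  qed
  have "\<phi> (\<lambda>x. h x o\<^sub>L k x) = \<phi> (\<lambda>x. k x o\<^sub>L h x)"
    using iso_mult[OF iso h Lk] iso_mult[OF iso Lk h] cen[OF Lk] by simp
  then have AEcomm: "AE x in M. h x o\<^sub>L k x = k x o\<^sub>L h x"
    using iso_eq[OF iso Lhk Lkh] by simp
  have AEcen: "AE x in M. h x = 0 \<or> h x = id_blinfun"
    using AEcomm AEidem
  proof eventually_elim
    fix x assume c: "h x o\<^sub>L k x = k x o\<^sub>L h x" and i: "h x o\<^sub>L h x = h x"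
    have "h x \<notin> \<Union>(range U)"
    proof
      assume "h x \<in> \<Union>(range U)"
      then have "h x \<in> U (F (h x))" by (rule F1)
      then show False using c unfolding U_def k_def by simp
    qed
    then have "\<And>r. norm r \<le> 1 \<Longrightarrow> h x o\<^sub>L r = r o\<^sub>L h x" unfolding U_def by blast
    then show "h x = 0 \<or> h x = id_blinfun" using idem_central[OF i] by blast
  qed
  define B where "B = h -` {id_blinfun} \<inter> space M"
  have Bs: "B \<in> sets M" unfolding B_def
    by (rule measurable_sets[OF hm]) (simp add: borel_closed)
  have "AE x in M. h x = indicator B x *\<^sub>R id_blinfun"
    using AEcen AE_space
  proof eventually_elim
    case (elim x)
    then show ?case unfolding B_def by (cases "h x = id_blinfun") (auto simp: indicator_def)
  qed
  then have "\<phi> h = chi_elem \<phi> B"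
    unfolding chi_elem_def using iso_eq[OF iso h Linf_ind[OF Bs]] by simp
  then show ?thesis using Bs by blast
qed



lemma bc_id_l: "id_blinfun o\<^sub>L x = x" by (rule blinfun_eqI) simp
lemma bc_id_r: "x o\<^sub>L id_blinfun = x" by (rule blinfun_eqI) simp

theorem theorem2p4:
  fixes M :: "'w measure"
    and A :: "('d::banach \<Rightarrow>\<^sub>L 'd) set"
    and \<phi> :: "('w \<Rightarrow> ('e::banach \<Rightarrow>\<^sub>L 'e)) \<Rightarrow> ('d \<Rightarrow>\<^sub>L 'd)"
    and T :: "'g::group_add \<Rightarrow> ('d \<Rightarrow>\<^sub>L 'd)"
    and a :: "'g \<Rightarrow> ('d \<Rightarrow>\<^sub>L 'd)"
    and S :: "'g set"
  assumes "sigma_finite_measure M"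
    and "banach_operator_algebra A"
    and "Linf_iso M A \<phi>"
    and "T 0 = id_blinfun"
    and "\<And>g h. T (g + h) = T g o\<^sub>L T h"
    and "\<And>g x. norm (T g x) = norm x"
    and "\<And>g. (\<lambda>b. T g o\<^sub>L b o\<^sub>L T (- g)) ` A = A"
    and "metrically_free M \<phi> T"
    and "finite S"
    and "\<And>g. a g \<in> A"
    and "\<And>g. g \<notin> S \<Longrightarrow> a g = 0"
  shows "norm (\<Sum>g\<in>S. a g o\<^sub>L T g) \<ge> norm (a 0)"
proof -
  note iso = assms(3)
  have T0: "T 0 = id_blinfun" by (rule assms(4))
  have Tinv1: "T g (T (-g) z) = z" for g z
  proof -
    have "T g o\<^sub>L T (-g) = id_blinfun" using assms(5)[of g "-g"] T0 by simp
    from arg_cong[OF this, of "\<lambda>f. blinfun_apply f z"] show ?thesis by simp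
  qed
  have Tinv2: "T (-g) (T g z) = z" for g z
  proof -
    have "T (-g) o\<^sub>L T g = id_blinfun" using assms(5)[of "-g" g] T0 by simp
    from arg_cong[OF this, of "\<lambda>f. blinfun_apply f z"] show ?thesis by simp
  qed
  have conjA: "T g o\<^sub>L b o\<^sub>L T (- g) \<in> A" if "b \<in> A" for g b
    using assms(7)[of g] that by blast
  define b where "b = (\<Sum>g\<in>S. a g o\<^sub>L T g)"
  show ?thesis
  proof (cases "0 \<in> S")
    case False
    then show ?thesis using assms(11)[OF False] by simp
  next
    case True
    show ?thesis
    proof (rule ccontr)
      assume "\<not> norm (\<Sum>g\<in>S. a g o\<^sub>L T g) \<ge> norm (a 0)"
      then have nb: "norm b < norm (a 0)" unfolding b_def by simp
      obtain f0 where f0: "Linf_fun M f0" "\<phi> f0 = a 0" using iso_surj[OF iso assms(10)] by blast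
      have f0m: "f0 \<in> borel_measurable M" using f0(1) unfolding Linf_fun_def by blast
      have s: "norm (a 0) = Linf_norm M f0" using iso_norm[OF iso f0(1)] f0(2) by simp
      define c where "c = (norm b + norm (a 0)) / 2"
      have c1: "norm b < c" and c2: "c < norm (a 0)" and c0: "0 \<le> c"
        using nb unfolding c_def by auto
      define \<Delta> where "\<Delta> = {x \<in> space M. c < norm (f0 x)}"
      have nm: "(\<lambda>x. norm (f0 x)) \<in> borel_measurable M"
        using measurable_compose[OF f0m borel_measurable_norm] by (simp add: o_def)
      have \<Delta>s: "\<Delta> \<in> sets M" unfolding \<Delta>_def using borel_measurable_iff_greater[THEN iffD1, OF nm] by blast
      have \<Delta>pos: "emeasure M \<Delta> > 0"
      proof (rule ccontr)
        assume "\<not> emeasure M \<Delta> > 0"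
        then have z: "emeasure M \<Delta> = 0" by (simp add: not_gr_zero)
        have eqD: "{x \<in> space M. \<not> norm (f0 x) \<le> c} = \<Delta>" unfolding \<Delta>_def by auto
        have "AE x in M. norm (f0 x) \<le> c" using AE_iff_measurable[OF \<Delta>s eqD] z by simp
        then have "Linf_norm M f0 \<le> c" by (rule Linf_norm_le[OF f0m _ c0])
        then show False using c2 s by simp
      qed
      have "\<exists>\<Delta>'\<in>sets M. \<Delta>' \<subseteq> \<Delta> \<and> emeasure M \<Delta>' > 0 \<and>
           (\<forall>g\<in>S. \<forall>h\<in>S. g \<noteq> h \<longrightarrow>
              (\<forall>\<Delta>g \<Delta>h. alpha_rel M \<phi> T g \<Delta>' \<Delta>g \<and> alpha_rel M \<phi> T h \<Delta>' \<Delta>h \<longrightarrow>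
                 emeasure M (\<Delta>g \<inter> \<Delta>h) = 0))"
        using mp[OF spec[OF spec[OF assms(8)[unfolded metrically_free_def], of S], of \<Delta>]] assms(9) \<Delta>s \<Delta>pos
        by blast
      then obtain \<Delta>' where D's: "\<Delta>' \<in> sets M" and D'r: "\<Delta>' \<subseteq> \<Delta> \<and> emeasure M \<Delta>' > 0 \<and>
           (\<forall>g\<in>S. \<forall>h\<in>S. g \<noteq> h \<longrightarrow>
              (\<forall>\<Delta>g \<Delta>h. alpha_rel M \<phi> T g \<Delta>' \<Delta>g \<and> alpha_rel M \<phi> T h \<Delta>' \<Delta>h \<longrightarrow>
                 emeasure M (\<Delta>g \<inter> \<Delta>h) = 0))"
        by (rule bexE)
      have D'sub: "\<Delta>' \<subseteq> \<Delta>" using D'r by (rule conjunct1)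
      have D'pos: "emeasure M \<Delta>' > 0" using D'r by (elim conjE)
      have free: "emeasure M (\<Delta>g \<inter> \<Delta>h) = 0"
        if "g \<in> S" "h \<in> S" "g \<noteq> h" "alpha_rel M \<phi> T g \<Delta>' \<Delta>g" "alpha_rel M \<phi> T h \<Delta>' \<Delta>h" for g h \<Delta>g \<Delta>h
      proof -
        have "\<forall>g\<in>S. \<forall>h\<in>S. g \<noteq> h \<longrightarrow>
              (\<forall>\<Delta>g \<Delta>h. alpha_rel M \<phi> T g \<Delta>' \<Delta>g \<and> alpha_rel M \<phi> T h \<Delta>' \<Delta>h \<longrightarrow>
                 emeasure M (\<Delta>g \<inter> \<Delta>h) = 0)" using D'r by (elim conjE)
        then have "\<forall>\<Delta>g \<Delta>h. alpha_rel M \<phi> T g \<Delta>' \<Delta>g \<and> alpha_rel M \<phi> T h \<Delta>' \<Delta>h \<longrightarrow>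
                 emeasure M (\<Delta>g \<inter> \<Delta>h) = 0" using that(1-3) by simp
        then show ?thesis using that(4,5) by simp
      qed
      define Xc where "Xc = chi_elem \<phi> \<Delta>'"
      have XcA: "Xc \<in> A" unfolding Xc_def using chi_in[OF iso D's] .
      have XcXc: "Xc (Xc y) = Xc y" for y
      proof -
        have "Xc o\<^sub>L Xc = Xc" unfolding Xc_def using chi_mult[OF iso D's D's] by simp
        from arg_cong[OF this, of "\<lambda>f. blinfun_apply f y"] show ?thesis by simp
      qed
      have Xccomm: "Xc (x y) = x (Xc y)" if "x \<in> A" for x y
      proof -
        have "Xc o\<^sub>L x = x o\<^sub>L Xc" unfolding Xc_def using chi_comm_A[OF iso D's that] .
        from arg_cong[OF this, of "\<lambda>f. blinfun_apply f y"] show ?thesis by simp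
      qed
      have alpha0: "alpha_rel M \<phi> T 0 \<Delta>' \<Delta>'"
        unfolding alpha_rel_def using D's T0 by (simp add: bc_id_l bc_id_r)
      have kill: "Xc o\<^sub>L (a g o\<^sub>L T g) o\<^sub>L Xc = 0" if gS: "g \<in> S" and g0: "g \<noteq> 0" for g
      proof -
        define q where "q = T g o\<^sub>L Xc o\<^sub>L T (- g)"
        have qA: "q \<in> A" unfolding q_def using conjA[OF XcA] .
        obtain h where h: "Linf_fun M h" "\<phi> h = q" using iso_surj[OF iso qA] by blast
        have qq: "q o\<^sub>L q = q"
          by (rule blinfun_eqI) (simp add: q_def Tinv2 XcXc)
        have qcen: "q o\<^sub>L \<phi> k = \<phi> k o\<^sub>L q" if k: "Linf_fun M k" for k
        proof (rule blinfun_eqI)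
          fix z
          define a1 where "a1 = \<phi> k"
          have a1A: "a1 \<in> A" unfolding a1_def using iso_in[OF iso k] .
          define a' where "a' = T (-g) o\<^sub>L a1 o\<^sub>L T (- (-g))"
          have a'A: "a' \<in> A" unfolding a'_def using conjA[OF a1A] .
          have e1: "T (-g) (a1 z) = a' (T (-g) z)" unfolding a'_def by (simp add: Tinv1)
          have "q (a1 z) = T g (Xc (a' (T (-g) z)))" unfolding q_def using e1 by simp
          also have "\<dots> = T g (a' (Xc (T (-g) z)))" using Xccomm[OF a'A] by simp
          also have "\<dots> = a1 (q z)" unfolding a'_def q_def by (simp add: Tinv1)
          finally show "(q o\<^sub>L \<phi> k) z = (\<phi> k o\<^sub>L q) z" unfolding a1_def by simp
        qed
        obtain \<Delta>g where Dgs: "\<Delta>g \<in> sets M" and qD: "\<phi> h = chi_elem \<phi> \<Delta>g"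
          using center_indicator[OF iso h(1)] h(2) qq qcen by metis
        have ag: "alpha_rel M \<phi> T g \<Delta>' \<Delta>g"
          unfolding alpha_rel_def using Dgs qD h(2) unfolding q_def Xc_def by simp
        have "emeasure M (\<Delta>g \<inter> \<Delta>') = 0" using free[OF gS True g0 ag alpha0] .
        then have "chi_elem \<phi> (\<Delta>' \<inter> \<Delta>g) = 0" using chi_null[OF iso, of "\<Delta>' \<inter> \<Delta>g"] D's Dgs
          by (simp add: Int_commute)
        then have Xcg: "Xc o\<^sub>L chi_elem \<phi> \<Delta>g = 0" unfolding Xc_def using chi_mult[OF iso D's Dgs] by simp
        have gA: "chi_elem \<phi> \<Delta>g \<in> A" using chi_in[OF iso Dgs] .
        have cg: "chi_elem \<phi> \<Delta>g (a g y) = a g (chi_elem \<phi> \<Delta>g y)" for y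
        proof -
          have "chi_elem \<phi> \<Delta>g o\<^sub>L a g = a g o\<^sub>L chi_elem \<phi> \<Delta>g" using chi_comm_A[OF iso Dgs assms(10)] .
          from arg_cong[OF this, of "\<lambda>f. blinfun_apply f y"] show ?thesis by simp
        qed
        have Xcg': "Xc (chi_elem \<phi> \<Delta>g y) = 0" for y
          using arg_cong[OF Xcg, of "\<lambda>f. blinfun_apply f y"] by simp
        have Tq: "T g (Xc z) = chi_elem \<phi> \<Delta>g (T g z)" for z
        proof -
          have "T g (Xc z) = q (T g z)" unfolding q_def by (simp add: Tinv2)
          then show ?thesis using qD h(2) by simp
        qed
        show ?thesis
        proof (rule blinfun_eqI)
          fix z
          have "(Xc o\<^sub>L (a g o\<^sub>L T g) o\<^sub>L Xc) z = Xc (a g (chi_elem \<phi> \<Delta>g (T g z)))" by (simp add: Tq)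
          also have "\<dots> = a g (Xc (chi_elem \<phi> \<Delta>g (T g z)))" using Xccomm[OF assms(10)] by simp
          also have "\<dots> = 0" using Xcg' by simp
          finally show "(Xc o\<^sub>L (a g o\<^sub>L T g) o\<^sub>L Xc) z = blinfun_apply 0 z" by simp
        qed
      qed
      have sumeq: "Xc o\<^sub>L b o\<^sub>L Xc = (\<Sum>g\<in>S. Xc o\<^sub>L (a g o\<^sub>L T g) o\<^sub>L Xc)"
        by (rule blinfun_eqI) (simp add: b_def blinfun.sum_left blinfun.sum_right)
      also have "\<dots> = (Xc o\<^sub>L (a 0 o\<^sub>L T 0) o\<^sub>L Xc) + (\<Sum>g\<in>S-{0}. Xc o\<^sub>L (a g o\<^sub>L T g) o\<^sub>L Xc)"
        by (rule sum.remove[OF assms(9) True, where g="\<lambda>g. Xc o\<^sub>L (a g o\<^sub>L T g) o\<^sub>L Xc"])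
      also have "(\<Sum>g\<in>S-{0}. Xc o\<^sub>L (a g o\<^sub>L T g) o\<^sub>L Xc) = 0"
        using kill by (intro sum.neutral) blast
      finally have beq: "Xc o\<^sub>L b o\<^sub>L Xc = Xc o\<^sub>L a 0 o\<^sub>L Xc" using T0 by (simp add: bc_id_r)
      have Xcn: "norm Xc \<le> 1" unfolding Xc_def using chi_norm[OF iso D's] .
      have "norm (Xc o\<^sub>L b o\<^sub>L Xc) \<le> norm (Xc o\<^sub>L b) * norm Xc" by (rule norm_blinfun_compose)
      also have "\<dots> \<le> norm (Xc o\<^sub>L b) * 1" using Xcn by (intro mult_left_mono) auto
      also have "norm (Xc o\<^sub>L b) \<le> norm Xc * norm b" by (rule norm_blinfun_compose)
      also have "\<dots> \<le> 1 * norm b" using Xcn by (intro mult_right_mono) auto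
      finally have up: "norm (Xc o\<^sub>L b o\<^sub>L Xc) \<le> norm b" by simp
      have rest: "Xc o\<^sub>L \<phi> f0 o\<^sub>L Xc = \<phi> (\<lambda>x. if x \<in> \<Delta>' then f0 x else 0)
          \<and> Linf_fun M (\<lambda>x. if x \<in> \<Delta>' then f0 x else 0)"
        unfolding Xc_def by (rule chi_restrict[OF iso D's f0(1)])
      have "c \<le> Linf_norm M (\<lambda>x. if x \<in> \<Delta>' then f0 x else 0)"
      proof (rule Linf_norm_ge[OF conjunct2[OF rest] D's D'pos])
        fix x assume "x \<in> \<Delta>'"
        then show "c \<le> norm (if x \<in> \<Delta>' then f0 x else 0)" using D'sub unfolding \<Delta>_def by auto
      qed
      also have "\<dots> = norm (Xc o\<^sub>L a 0 o\<^sub>L Xc)"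
        using iso_norm[OF iso conjunct2[OF rest]] conjunct1[OF rest] f0(2) by simp
      also have "\<dots> \<le> norm b" using up beq by simp
      finally show False using c1 by simp
    qed
  qed
qed

end
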